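(* Let $\mathcal G$ be an ultragraph (with no sinks) and $X$ its ultragraph shift space. Then $X$ contains a closed, shift invariant ($\sigma(Y)\subseteq Y$), uncountable and irreducible subset $Y$ if and only if $\mathcal G$ has a vertex $v$ with $\#CP_{\mathcal G}(v)\ge2$.
   Context: An ultragraph $\mathcal G=(G^0,\mathcal G^1,r,s)$ consists of countable sets $G^0$ (vertices) and $\mathcal G^1$ (edges), a map $s:\mathcal G^1\to G^0$ and a map $r:\mathcal G^1\to P(G^0)\setminus\{\emptyset\}$. Standing assumption: $\mathcal G$ has no sinks, i.e. $s^{-1}(v)\neq\emptyset$ for every $v\in G^0$. $\mathcal G^0$ is the smallest subset of $P(G^0)$ containing $\{v\}$ for all $v\in G^0$ and $r(e)$ for all $e\in\mathcal G^1$, and closed under finite unions and nonempty finite intersections. A finite path is either an element of $\mathcal G^0$ (length $0$) or a sequence of edges $e_1\dots e_k$ with $s(e_{i+1})\in r(e_i)$ (length $k$); an infinite path is a sequence $e_1e_2\dots$ of edges with $s(e_{i+1})\in r(e_i)$ for all $i$, and $\mathfrak p^\infty$ is the set of infinite paths. The set of ultrapaths $\mathfrak p$ consists of all $A\in\mathcal G^0$ (length $0$) and all pairs $(\alpha,A)$ with $\alpha=e_1\dots e_k$ a finite path, $k\ge1$, $A\in\mathcal G^0$, $A\subseteq r(e_k)$ (length $k$). A set $A\in\mathcal G^0$ is an infinite emitter if $\{e\in\mathcal G^1:s(e)\in A\}$ is infinite, and a minimal infinite emitter if moreover no proper subset of $A$ belonging to $\mathcal G^0$ is an infinite emitter. The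 ultragraph shift space is $X=\mathfrak p^\infty\cup X_{fin}$, where $X_{fin}$ consists of all $(\alpha,A)\in\mathfrak p$ with $|\alpha|\ge1$ and $A$ a minimal infinite emitter contained in $r(\alpha)$, together with all minimal infinite emitters $A\in\mathcal G^0$. An ultrapath $p$ is an initial segment of $x\in X$ when: if $p=A\in\mathcal G^0$, then either $x$ has length $\ge1$ and its first edge has source in $A$, or $x=B\in\mathcal G^0$ with $B\subseteq A$; if $p=(\alpha,A)$ with $|\alpha|\ge1$, then the first $|\alpha|$ edges of $x$ form $\alpha$ and either $x$ has length $>|\alpha|$ and its $(|\alpha|+1)$-th edge has source in $A$, or $x=(\alpha,B)$ with $B\subseteq A$. Fix an enumeration $\mathfrak p=\{p_1,p_2,\dots\}$; the metric on $X$ is $d(x,x)=0$ and, for $x\neq y$, $d(x,y)=2^{-i}$ where $i$ is the least index such that $p_i$ is an initial segment of exactly one of $x,y$ (the topology does not depend on the enumeration). The shift map $\sigma:X\to X$ is $\sigma(\gamma_1\gamma_2\dots)=\gamma_2\gamma_3\dots$, $\sigma((\gamma_1\dots\gamma_n,A))=(\gamma_2\dots\gamma_n,A)$ if $n>1$, $\sigma((\gamma_1,A))=A$, $\sigma(A)=A$. For a closed shift invariant $Y\subseteq X$ and $n\ge1$, $B_n(Y)$ is the set of finite paths $w$ of length $n$ such that $w\gamma\in Y$ for some infinite path $\gamma$, and $B(Y)=\bigcup_n B_n(Y)$; $Y$ is irreducible if for all $u,w\in B(Y)$ there is $z\in B(Y)$ with $uzw\in B(Y)$. A closed path based at the vertex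 $v$ is a finite path $e_1e_2\dots e_k$ ($k\ge1$) with $v=s(e_1)\in r(e_k)$ and $s(e_i)\neq v$ for all $1<i\le k$; $CP_{\mathcal G}(v)$ denotes the set of closed paths based at $v$. *)

theory Defs
  imports Complex_Main "HOL-Library.Countable_Set"
begin

record ('v, 'e) ultragraph =
  V :: "'v set"
  E :: "'e set"
  src :: "'e \<Rightarrow> 'v"
  rng :: "'e \<Rightarrow> 'v set"

definition is_ultragraph :: "('v, 'e) ultragraph \<Rightarrow> bool" where
  "is_ultragraph G \<longleftrightarrow> countable (V G) \<and> countable (E G)
     \<and> (\<forall>e\<in>E G. src G e \<in> V G \<and> rng G e \<noteq> {} \<and> rng G e \<subseteq> V G)"

definition no_sinks :: "('v, 'e) ultragraph \<Rightarrow> bool" where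
  "no_sinks G \<longleftrightarrow> (\<forall>v\<in>V G. \<exists>e\<in>E G. src G e = v)"

inductive_set gverts :: "('v, 'e) ultragraph \<Rightarrow> 'v set set" for G where
  sing: "v \<in> V G \<Longrightarrow> {v} \<in> gverts G"
| rng: "e \<in> E G \<Longrightarrow> rng G e \<in> gverts G"
| union: "A \<in> gverts G \<Longrightarrow> B \<in> gverts G \<Longrightarrow> A \<union> B \<in> gverts G"
| inter: "A \<in> gverts G \<Longrightarrow> B \<in> gverts G \<Longrightarrow> A \<inter> B \<noteq> {} \<Longrightarrow> A \<inter> B \<in> gverts G"

definition fpath :: "('v, 'e) ultragraph \<Rightarrow> 'e list \<Rightarrow> bool" where
  "fpath G \<alpha> \<longleftrightarrow> \<alpha> \<noteq> [] \<and> set \<alpha> \<subseteq> E G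
     \<and> (\<forall>i. Suc i < length \<alpha> \<longrightarrow> src G (\<alpha> ! Suc i) \<in> rng G (\<alpha> ! i))"

definition ipath :: "('v, 'e) ultragraph \<Rightarrow> (nat \<Rightarrow> 'e) \<Rightarrow> bool" where
  "ipath G \<gamma> \<longleftrightarrow> (\<forall>i. \<gamma> i \<in> E G \<and> src G (\<gamma> (Suc i)) \<in> rng G (\<gamma> i))"

text \<open>Ultrapaths: pairs (\<alpha>, A); \<alpha> = [] encodes the length-0 ultrapath A.\<close>
definition ultrapaths :: "('v, 'e) ultragraph \<Rightarrow> ('e list \<times> 'v set) set" where
  "ultrapaths G = {([], A) | A. A \<in> gverts G}
     \<union> {(\<alpha>, A) | \<alpha> A. fpath G \<alpha> \<and> A \<in> gverts G \<and> A \<subseteq> rng G (last \<alpha>)}"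

definition inf_emitter :: "('v, 'e) ultragraph \<Rightarrow> 'v set \<Rightarrow> bool" where
  "inf_emitter G A \<longleftrightarrow> A \<in> gverts G \<and> infinite {e \<in> E G. src G e \<in> A}"

definition min_inf_emitter :: "('v, 'e) ultragraph \<Rightarrow> 'v set \<Rightarrow> bool" where
  "min_inf_emitter G A \<longleftrightarrow> inf_emitter G A \<and> \<not> (\<exists>B. B \<subset> A \<and> inf_emitter G B)"

datatype ('v, 'e) xpt = Inf "nat \<Rightarrow> 'e" | Fin "'e list" "'v set"

definition shift_space :: "('v, 'e) ultragraph \<Rightarrow> ('v, 'e) xpt set" where
  "shift_space G = {Inf \<gamma> | \<gamma>. ipath G \<gamma>}
     \<union> {Fin \<alpha> A | \<alpha> A. fpath G \<alpha> \<and> min_inf_emitter G A \<and> A \<subseteq> rng G (last \<alpha>)}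
     \<union> {Fin [] A | A. min_inf_emitter G A}"

fun init_seg :: "('v, 'e) ultragraph \<Rightarrow> ('e list \<times> 'v set) \<Rightarrow> ('v, 'e) xpt \<Rightarrow> bool" where
  "init_seg G (\<alpha>, A) (Inf \<gamma>) \<longleftrightarrow>
     (\<forall>i<length \<alpha>. \<gamma> i = \<alpha> ! i) \<and> src G (\<gamma> (length \<alpha>)) \<in> A"
| "init_seg G (\<alpha>, A) (Fin \<beta> B) \<longleftrightarrow>
     (length \<alpha> < length \<beta> \<and> take (length \<alpha>) \<beta> = \<alpha> \<and> src G (\<beta> ! length \<alpha>) \<in> A)
     \<or> (\<beta> = \<alpha> \<and> B \<subseteq> A)"

definition up_enum :: "('v, 'e) ultragraph \<Rightarrow> nat \<Rightarrow> 'e list \<times> 'v set" where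
  "up_enum G i = from_nat_into (ultrapaths G) (i - 1)"

definition xdist :: "('v, 'e) ultragraph \<Rightarrow> ('v, 'e) xpt \<Rightarrow> ('v, 'e) xpt \<Rightarrow> real" where
  "xdist G x y = (if x = y then 0 else
     (1/2) ^ (LEAST i. 1 \<le> i \<and> init_seg G (up_enum G i) x \<noteq> init_seg G (up_enum G i) y))"

definition xclosed :: "('v, 'e) ultragraph \<Rightarrow> ('v, 'e) xpt set \<Rightarrow> bool" where
  "xclosed G Y \<longleftrightarrow> Y \<subseteq> shift_space G \<and>
     (\<forall>x\<in>shift_space G. (\<forall>\<epsilon>>0. \<exists>y\<in>Y. xdist G x y < \<epsilon>) \<longrightarrow> x \<in> Y)"

fun shift :: "('v, 'e) xpt \<Rightarrow> ('v, 'e) xpt" where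
  "shift (Inf \<gamma>) = Inf (\<lambda>i. \<gamma> (Suc i))"
| "shift (Fin \<alpha> A) = Fin (tl \<alpha>) A"

definition concat_inf :: "'e list \<Rightarrow> (nat \<Rightarrow> 'e) \<Rightarrow> (nat \<Rightarrow> 'e)" where
  "concat_inf w \<gamma> = (\<lambda>i. if i < length w then w ! i else \<gamma> (i - length w))"

definition blocks_n :: "('v, 'e) ultragraph \<Rightarrow> ('v, 'e) xpt set \<Rightarrow> nat \<Rightarrow> 'e list set" where
  "blocks_n G Y n = {w. fpath G w \<and> length w = n \<and>
                        (\<exists>\<gamma>. ipath G \<gamma> \<and> Inf (concat_inf w \<gamma>) \<in> Y)}"

definition blocks :: "('v, 'e) ultragraph \<Rightarrow> ('v, 'e) xpt set \<Rightarrow> 'e list set" where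
  "blocks G Y = (\<Union>n\<in>{1..}. blocks_n G Y n)"

definition irreducible_sub :: "('v, 'e) ultragraph \<Rightarrow> ('v, 'e) xpt set \<Rightarrow> bool" where
  "irreducible_sub G Y \<longleftrightarrow>
     (\<forall>u\<in>blocks G Y. \<forall>w\<in>blocks G Y. \<exists>z\<in>blocks G Y. u @ z @ w \<in> blocks G Y)"

definition closed_paths :: "('v, 'e) ultragraph \<Rightarrow> 'v \<Rightarrow> 'e list set" where
  "closed_paths G v = {c. fpath G c \<and> src G (hd c) = v \<and> v \<in> rng G (last c)
                         \<and> (\<forall>i. 0 < i \<and> i < length c \<longrightarrow> src G (c ! i) \<noteq> v)}"

end

theory Submission
  imports Defs
begin


lemma uncountable_nat_bool: "uncountable (UNIV :: (nat \<Rightarrow> bool) set)"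
proof
  assume "countable (UNIV :: (nat \<Rightarrow> bool) set)"
  then obtain f :: "nat \<Rightarrow> (nat \<Rightarrow> bool)" where "range f = UNIV"
    by (metis uncountable_def UNIV_not_empty)
  then obtain n where "f n = (\<lambda>k. \<not> f k k)" by (metis UNIV_I imageE)
  then show False by (metis)
qed

fun stage :: "('v, 'e) ultragraph \<Rightarrow> nat \<Rightarrow> 'v set set" where
  "stage G 0 = (\<lambda>v. {v}) ` V G \<union> rng G ` E G"
| "stage G (Suc n) = stage G n \<union> (\<lambda>(A,B). A \<union> B) ` (stage G n \<times> stage G n)
      \<union> (\<lambda>(A,B). A \<inter> B) ` (stage G n \<times> stage G n)"

lemma stage_countable: "is_ultragraph G \<Longrightarrow> countable (stage G n)"
  by (induction n) (auto simp: is_ultragraph_def)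

lemma stage_mono: "n \<le> m \<Longrightarrow> stage G n \<subseteq> stage G m"
  by (rule lift_Suc_mono_le[of "stage G"]) auto

lemma gverts_stage: "A \<in> gverts G \<Longrightarrow> \<exists>n. A \<in> stage G n"
proof (induction rule: gverts.induct)
  case (union A B)
  then obtain n m where "A \<in> stage G n" "B \<in> stage G m" by blast
  then have "A \<in> stage G (max n m)" "B \<in> stage G (max n m)"
    using stage_mono[of n "max n m" G] stage_mono[of m "max n m" G] by auto
  then have "A \<union> B \<in> stage G (Suc (max n m))" by auto
  then show ?case by blast
next
  case (inter A B)
  then obtain n m where "A \<in> stage G n" "B \<in> stage G m" by blast
  then have "A \<in> stage G (max n m)" "B \<in> stage G (max n m)"
    using stage_mono[of n "max n m" G] stage_mono[of m "max n m" G] by auto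
  then have "A \<inter> B \<in> stage G (Suc (max n m))" by auto
  then show ?case by blast
qed (metis UnI1 UnI2 image_eqI stage.simps(1))+

lemma gverts_countable: "is_ultragraph G \<Longrightarrow> countable (gverts G)"
proof -
  assume "is_ultragraph G"
  have "gverts G \<subseteq> (\<Union>n. stage G n)" using gverts_stage by blast
  then show ?thesis using stage_countable[OF \<open>is_ultragraph G\<close>]
    by (meson countable_UN countable_subset UNIV_I countableI_type)
qed

lemma fpath_lists: "fpath G a \<Longrightarrow> a \<in> lists (E G)"
  by (auto simp: fpath_def)

lemma ultrapaths_countable: "is_ultragraph G \<Longrightarrow> countable (ultrapaths G)"
proof -
  assume u: "is_ultragraph G"
  have "ultrapaths G \<subseteq> lists (E G) \<times> gverts G"
    by (auto simp: ultrapaths_def fpath_def)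
  moreover have "countable (lists (E G) \<times> gverts G)"
    using u gverts_countable by (auto simp: is_ultragraph_def)
  ultimately show ?thesis by (rule countable_subset)
qed

lemma key_one:
  assumes "countable (ultrapaths G)" "p \<in> ultrapaths G"
  shows "\<exists>N. \<forall>x y. xdist G x y < (1/2)^N \<longrightarrow> (init_seg G p x \<longleftrightarrow> init_seg G p y)"
proof -
  obtain n where n: "from_nat_into (ultrapaths G) n = p" using from_nat_into_surj[OF assms(1) assms(2)] by blast
  have up: "up_enum G (Suc n) = p" using n by (simp add: up_enum_def)
  show ?thesis
  proof (intro exI allI impI)
    fix x y assume d: "xdist G x y < (1/2)^(Suc n)"
    show "init_seg G p x \<longleftrightarrow> init_seg G p y"
    proof (rule ccontr)
      assume ne: "\<not> ?thesis"
      then have "x \<noteq> y" by auto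
      let ?P = "\<lambda>i. 1 \<le> i \<and> init_seg G (up_enum G i) x \<noteq> init_seg G (up_enum G i) y"
      have P: "?P (Suc n)" using ne up by auto
      have le: "(LEAST i. ?P i) \<le> Suc n" using Least_le[of ?P, OF P] .
      have "xdist G x y = (1/2)^(LEAST i. ?P i)" using \<open>x \<noteq> y\<close> unfolding xdist_def by (rule if_not_P)
      moreover have "(1/2::real)^(Suc n) \<le> (1/2)^(LEAST i. ?P i)" using le by (rule power_decreasing) auto
      ultimately show False using d by linarith
    qed
  qed
qed

lemma key_fin:
  assumes "countable (ultrapaths G)" "finite F" "F \<subseteq> ultrapaths G"
  shows "\<exists>N. \<forall>x y. xdist G x y < (1/2)^N \<longrightarrow> (\<forall>p\<in>F. init_seg G p x \<longleftrightarrow> init_seg G p y)"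
  using assms(2,3)
proof (induction F rule: finite_induct)
  case empty then show ?case by auto
next
  case (insert p F)
  then obtain N where N: "\<forall>x y. xdist G x y < (1/2)^N \<longrightarrow> (\<forall>p\<in>F. init_seg G p x \<longleftrightarrow> init_seg G p y)" by auto
  have pu: "p \<in> ultrapaths G" using insert.prems by auto
  obtain M where M: "\<forall>x y. xdist G x y < (1/2)^M \<longrightarrow> (init_seg G p x \<longleftrightarrow> init_seg G p y)"
    using key_one[OF assms(1) pu] by blast
  have a: "(1/2::real)^(max N M) \<le> (1/2)^N" "(1/2::real)^(max N M) \<le> (1/2)^M"
    by (auto intro: power_decreasing)
  show ?case
  proof (intro exI allI impI)
    fix x y assume d: "xdist G x y < (1/2)^(max N M)"
    have "xdist G x y < (1/2)^N" "xdist G x y < (1/2)^M" using d a by linarith+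
    then show "\<forall>q\<in>insert p F. init_seg G q x = init_seg G q y" using N M by auto
  qed
qed



definition loopp :: "('v, 'e) ultragraph \<Rightarrow> 'v \<Rightarrow> 'e list \<Rightarrow> bool" where
  "loopp G v l \<longleftrightarrow> fpath G l \<and> src G (hd l) = v \<and> v \<in> rng G (last l)"

lemma fpath_take: "fpath G l \<Longrightarrow> 0 < j \<Longrightarrow> fpath G (take j l)"
  unfolding fpath_def by (auto dest: in_set_takeD)

lemma fpath_drop: "fpath G l \<Longrightarrow> j < length l \<Longrightarrow> fpath G (drop j l)"
  unfolding fpath_def by (auto dest: in_set_dropD)

lemma first_return:
  assumes "loopp G v l"
  shows "\<exists>j. 0 < j \<and> j \<le> length l \<and> take j l \<in> closed_paths G v \<and> (j < length l \<longrightarrow> src G (l!j) = v)"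
proof -
  have fp: "fpath G l" and h: "src G (hd l) = v" and la: "v \<in> rng G (last l)"
    using assms by (auto simp: loopp_def)
  have ne: "l \<noteq> []" using fp by (simp add: fpath_def)
  have ch: "\<And>i. Suc i < length l \<Longrightarrow> src G (l ! Suc i) \<in> rng G (l ! i)"
    using fp by (simp add: fpath_def)
  define Q where "Q = (\<lambda>j. 0 < j \<and> j < length l \<and> src G (l!j) = v)"
  define j where "j = (if \<exists>k. Q k then (LEAST k. Q k) else length l)"
  have j0: "0 < j" and jl: "j \<le> length l" and jv: "j < length l \<longrightarrow> src G (l!j) = v"
    and jmin: "\<And>i. 0 < i \<Longrightarrow> i < j \<Longrightarrow> src G (l!i) \<noteq> v"
  proof -
    have "0 < j \<and> j \<le> length l \<and> (j < length l \<longrightarrow> src G (l!j) = v)"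
    proof (cases "\<exists>k. Q k")
      case True
      then have "Q (LEAST k. Q k)" by (rule LeastI_ex)
      then show ?thesis using True unfolding j_def Q_def by simp
    next
      case False
      then have "j = length l" unfolding j_def by (simp only: if_False)
      then show ?thesis using ne by simp
    qed
    then show "0 < j" "j \<le> length l" "j < length l \<longrightarrow> src G (l!j) = v" by auto
    fix i assume "0 < i" "i < j"
    show "src G (l!i) \<noteq> v"
    proof
      assume "src G (l!i) = v"
      then have "Q i" using \<open>0<i\<close> \<open>i<j\<close> \<open>j \<le> length l\<close> by (simp add: Q_def)
      then have "(LEAST k. Q k) \<le> i" by (rule Least_le)
      moreover have "Ex Q" using \<open>Q i\<close> by blast
      then have "j = (LEAST k. Q k)" unfolding j_def by (rule if_P)
      ultimately show False using \<open>i<j\<close> by simp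
    qed
  qed
  have "take j l \<in> closed_paths G v"
    unfolding closed_paths_def
  proof (intro CollectI conjI allI impI)
    show "fpath G (take j l)" using fp j0 by (rule fpath_take)
    show "src G (hd (take j l)) = v" using h j0 ne by (simp add: hd_take)
    show "v \<in> rng G (last (take j l))"
    proof (cases "j < length l")
      case True
      then have "last (take j l) = l ! (j - 1)" using j0 using ne by (simp add: last_conv_nth min_def)
      moreover have "src G (l ! Suc (j-1)) \<in> rng G (l ! (j-1))" using ch[of "j-1"] True j0 by simp
      ultimately show ?thesis using jv True j0 by simp
    next
      case False
      then have "take j l = l" using jl by simp
      then show ?thesis using la by simp
    qed
    fix i assume "0 < i \<and> i < length (take j l)"
    then show "src G (take j l ! i) \<noteq> v" using jmin by simp
  qed
  then show ?thesis using j0 jl jv by blast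
qed

lemma loop_periodic:
  assumes "loopp G v l" "c \<in> closed_paths G v" "\<forall>c'\<in>closed_paths G v. c' = c"
  shows "\<forall>i<length l. l!i = c!(i mod length c)"
  using assms(1)
proof (induction "length l" arbitrary: l rule: less_induct)
  case less
  obtain j where j0: "0 < j" and jl: "j \<le> length l" and jc: "take j l \<in> closed_paths G v"
    and jv: "j < length l \<longrightarrow> src G (l!j) = v" using first_return[OF less.prems] by blast
  have tc: "take j l = c" using jc assms(3) by blast
  then have lc: "length c = j" using jl by auto
  show ?case
  proof (intro allI impI)
    fix i assume il: "i < length l"
    show "l!i = c!(i mod length c)"
    proof (cases "i < j")
      case True
      then show ?thesis using tc lc by auto
    next
      case False
      then have jl2: "j < length l" using il by simp
      have fp: "fpath G l" using less.prems by (simp add: loopp_def)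
      have "loopp G v (drop j l)"
        unfolding loopp_def using fpath_drop[OF fp jl2] jv jl2 less.prems
        by (auto simp: loopp_def hd_drop_conv_nth)
      moreover have "length (drop j l) < length l" using j0 jl2 by simp
      ultimately have IH: "\<forall>k<length (drop j l). drop j l ! k = c!(k mod length c)"
        using less.hyps by blast
      have "l ! i = drop j l ! (i - j)" using False jl2 by simp
      also have "\<dots> = c!((i-j) mod length c)" using IH[rule_format, of "i-j"] il False by simp
      also have "(i-j) mod length c = i mod length c" using False lc
        by (simp add: le_mod_geq)
      finally show ?thesis .
    qed
  qed
qed



lemma blocks_fpath: "w \<in> blocks G Y \<Longrightarrow> fpath G w"
  by (auto simp: blocks_def blocks_n_def)

lemma ipath_prefix: "ipath G \<gamma> \<Longrightarrow> 0 < n \<Longrightarrow> fpath G (map \<gamma> [0..<n])"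
  by (auto simp: fpath_def ipath_def)

lemma concat_inf_split: "concat_inf (map \<gamma> [0..<n]) (\<lambda>i. \<gamma> (i + n)) = \<gamma>"
  by (auto simp: concat_inf_def)

lemma ipath_shiftn: "ipath G \<gamma> \<Longrightarrow> ipath G (\<lambda>i. \<gamma> (i + n))"
  by (auto simp: ipath_def)

lemma prefix_block:
  assumes "ipath G \<gamma>" "Inf \<gamma> \<in> Y" "0 < n"
  shows "map \<gamma> [0..<n] \<in> blocks G Y"
proof -
  have "map \<gamma> [0..<n] \<in> blocks_n G Y n"
    unfolding blocks_n_def
    using ipath_prefix[OF assms(1,3)] ipath_shiftn[OF assms(1), of n] assms(2)
    by (auto simp: concat_inf_split intro!: exI[of _ "\<lambda>i. \<gamma> (i + n)"])
  then show ?thesis using assms(3) unfolding blocks_def by auto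
qed

lemma loop_from_irr:
  assumes irr: "irreducible_sub G Y" and ip: "ipath G \<gamma>" and inY: "Inf \<gamma> \<in> Y" and n: "0 < n"
  shows "\<exists>l. loopp G (src G (\<gamma> 0)) l \<and> n \<le> length l \<and> (\<forall>i<n. l!i = \<gamma> i)"
proof -
  let ?u = "map \<gamma> [0..<n]"
  have ub: "?u \<in> blocks G Y" using prefix_block[OF ip inY n] .
  then obtain z where zb: "z \<in> blocks G Y" and wb: "?u @ z @ ?u \<in> blocks G Y"
    using irr unfolding irreducible_sub_def by blast
  let ?w = "?u @ z @ ?u"
  let ?l = "?u @ z"
  have fw: "fpath G ?w" using blocks_fpath[OF wb] .
  have zne: "z \<noteq> []" using blocks_fpath[OF zb] by (simp add: fpath_def)
  have tk: "take (length ?l) ?w = ?l" by simp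
  have fl: "fpath G ?l" using fpath_take[OF fw, of "length ?l"] n by simp
  have hd: "hd ?l = \<gamma> 0" using n by (simp add: hd_map)
  have ll: "length ?l = Suc (length ?l - 1)" using n by simp
  have ch: "\<forall>i. Suc i < length ?w \<longrightarrow> src G (?w ! Suc i) \<in> rng G (?w ! i)"
    using fw unfolding fpath_def by blast
  have "Suc (length ?l - 1) < length ?w" using n by simp
  then have "src G (?w ! Suc (length ?l - 1)) \<in> rng G (?w ! (length ?l - 1))"
    using ch by blast
  moreover have "?w ! Suc (length ?l - 1) = \<gamma> 0"
    using ll[symmetric] n by (simp add: nth_append)
  moreover have "?w ! (length ?l - 1) = last ?l"
    using n zne by (simp add: last_conv_nth nth_append)
  ultimately have "src G (\<gamma> 0) \<in> rng G (last ?l)" by simp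
  then have "loopp G (src G (\<gamma> 0)) ?l" using fl hd by (simp add: loopp_def)
  moreover have "\<forall>i<n. ?l ! i = \<gamma> i" by (simp add: nth_append)
  ultimately show ?thesis by (intro exI[of _ ?l]) auto
qed

lemma forward:
  fixes G :: "('v, 'e) ultragraph"
  assumes u: "is_ultragraph G" and Ysub: "Y \<subseteq> shift_space G" and unc: "uncountable Y"
    and irr: "irreducible_sub G Y"
    and no2: "\<not> (\<exists>v\<in>V G. \<exists>c1\<in>closed_paths G v. \<exists>c2\<in>closed_paths G v. c1 \<noteq> c2)"
  shows False
proof -
  define P :: "('v, 'e) xpt set" where "P = (\<lambda>c. Inf (\<lambda>i. c!(i mod length c))) ` lists (E G)"
  define F where "F = (\<lambda>(a,A). Fin a A) ` (lists (E G) \<times> gverts G)"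
  have cP: "countable P" unfolding P_def using u by (auto simp: is_ultragraph_def)
  have cF: "countable F" unfolding F_def using u gverts_countable by (auto simp: is_ultragraph_def)
  have "Y \<subseteq> P \<union> F"
  proof
    fix x assume xY: "x \<in> Y"
    then have xs: "x \<in> shift_space G" using Ysub by auto
    show "x \<in> P \<union> F"
    proof (cases x)
      case (Fin a A)
      then have "a \<in> lists (E G) \<and> A \<in> gverts G" using xs
        by (auto simp: shift_space_def min_inf_emitter_def inf_emitter_def fpath_def)
      then show ?thesis unfolding F_def using Fin by auto
    next
      case (Inf \<gamma>)
      have ip: "ipath G \<gamma>" using xs Inf by (auto simp: shift_space_def)
      have inY: "Inf \<gamma> \<in> Y" using xY Inf by simp
      let ?v = "src G (\<gamma> 0)"
      have vV: "?v \<in> V G" using u ip by (auto simp: is_ultragraph_def ipath_def)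
      obtain l1 where l1: "loopp G ?v l1" using loop_from_irr[OF irr ip inY, of 1] by auto
      obtain j where "take j l1 \<in> closed_paths G ?v" using first_return[OF l1] by blast
      then obtain c where c: "c \<in> closed_paths G ?v" by blast
      have uniq: "\<forall>c'\<in>closed_paths G ?v. c' = c" using no2 vV c by blast
      have "\<forall>i. \<gamma> i = c!(i mod length c)"
      proof
        fix i
        obtain l where l: "loopp G ?v l" "Suc i \<le> length l" "\<forall>k<Suc i. l!k = \<gamma> k"
          using loop_from_irr[OF irr ip inY, of "Suc i"] by auto
        have "l!i = c!(i mod length c)" using loop_periodic[OF l(1) c uniq] l(2) by auto
        then show "\<gamma> i = c!(i mod length c)" using l(3) by auto
      qed
      then have "\<gamma> = (\<lambda>i. c!(i mod length c))" by auto
      moreover have "c \<in> lists (E G)" using c by (auto simp: closed_paths_def fpath_def)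
      ultimately show ?thesis unfolding P_def using Inf by auto
    qed
  qed
  then have "countable Y" using cP cF by (meson countable_Un countable_subset)
  then show False using unc by simp
qed



inductive_set Wd :: "'e list \<Rightarrow> 'e list \<Rightarrow> 'e list set" for c1 c2 where
  nil: "[] \<in> Wd c1 c2"
| cons: "c \<in> {c1, c2} \<Longrightarrow> w \<in> Wd c1 c2 \<Longrightarrow> c @ w \<in> Wd c1 c2"

lemma Wd_app: "a \<in> Wd c1 c2 \<Longrightarrow> b \<in> Wd c1 c2 \<Longrightarrow> a @ b \<in> Wd c1 c2"
  by (induction a rule: Wd.induct) (auto intro: Wd.cons)

lemma Wd_c1: "c1 \<in> Wd c1 c2" using Wd.cons[of c1 c1 c2 "[]", OF _ Wd.nil] by simp
lemma Wd_c2: "c2 \<in> Wd c1 c2" using Wd.cons[of c2 c1 c2 "[]", OF _ Wd.nil] by simp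

definition chain :: "('v, 'e) ultragraph \<Rightarrow> 'e list \<Rightarrow> bool" where
  "chain G w \<longleftrightarrow> (\<forall>i. Suc i < length w \<longrightarrow> src G (w ! Suc i) \<in> rng G (w ! i))"

lemma chain_append:
  assumes "chain G a" "chain G b" "a \<noteq> [] \<Longrightarrow> b \<noteq> [] \<Longrightarrow> src G (hd b) \<in> rng G (last a)"
  shows "chain G (a @ b)"
  unfolding chain_def
proof (intro allI impI)
  fix i assume i: "Suc i < length (a @ b)"
  consider "Suc i < length a" | "Suc i = length a" | "length a < Suc i" by linarith
  then show "src G ((a @ b) ! Suc i) \<in> rng G ((a @ b) ! i)"
  proof cases
    case 1 then show ?thesis using assms(1) by (simp add: chain_def nth_append)
  next
    case 2
    then have "a \<noteq> []" "b \<noteq> []" using i by auto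
    moreover have "(a @ b) ! Suc i = hd b" using 2 \<open>b \<noteq> []\<close> by (simp add: nth_append hd_conv_nth)
    moreover have "i = length a - 1" using 2 by simp
    then have "(a @ b) ! i = last a" using 2 \<open>a \<noteq> []\<close> by (simp add: nth_append last_conv_nth)
    ultimately show ?thesis using assms(3) by simp
  next
    case 3
    then have "Suc (i - length a) < length b" using i by simp
    then have "src G (b ! Suc (i - length a)) \<in> rng G (b ! (i - length a))"
      using assms(2) by (simp add: chain_def)
    moreover have "Suc i - length a = Suc (i - length a)" using 3 by simp
    ultimately show ?thesis using 3 by (simp add: nth_append)
  qed
qed

lemma chain_infix: "chain G (p @ x @ s) \<Longrightarrow> chain G x"
  unfolding chain_def
proof (intro allI impI)
  fix i assume c: "\<forall>i. Suc i < length (p @ x @ s) \<longrightarrow> src G ((p @ x @ s) ! Suc i) \<in> rng G ((p @ x @ s) ! i)"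
    and i: "Suc i < length x"
  have "Suc (length p + i) < length (p @ x @ s)" using i by simp
  then have "src G ((p @ x @ s) ! Suc (length p + i)) \<in> rng G ((p @ x @ s) ! (length p + i))"
    using c by blast
  then show "src G (x ! Suc i) \<in> rng G (x ! i)" using i by (simp add: nth_append)
qed

lemma fpath_chain: "fpath G w \<longleftrightarrow> w \<noteq> [] \<and> set w \<subseteq> E G \<and> chain G w"
  by (simp add: fpath_def chain_def)

lemma Wd_prop:
  assumes "c1 \<in> closed_paths G v" "c2 \<in> closed_paths G v" "w \<in> Wd c1 c2"
  shows "set w \<subseteq> E G \<and> set w \<subseteq> set c1 \<union> set c2 \<and> chain G w
         \<and> (w \<noteq> [] \<longrightarrow> src G (hd w) = v \<and> v \<in> rng G (last w))"
  using assms(3)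
proof (induction rule: Wd.induct)
  case nil then show ?case by (simp add: chain_def)
next
  case (cons c w)
  have cc: "c \<in> closed_paths G v" using cons.hyps(1) assms(1,2) by auto
  then have fc: "fpath G c" "src G (hd c) = v" "v \<in> rng G (last c)"
    by (auto simp: closed_paths_def)
  have cne: "c \<noteq> []" using fc by (simp add: fpath_def)
  have ch: "chain G (c @ w)"
    using chain_append[of G c w] fc cons.IH by (auto simp: fpath_chain)
  have s1: "set (c @ w) \<subseteq> E G" using fc cons.IH by (auto simp: fpath_def)
  have s2: "set (c @ w) \<subseteq> set c1 \<union> set c2" using cons.IH cons.hyps(1) by auto
  have h: "src G (hd (c @ w)) = v" using fc cne by simp
  have l: "v \<in> rng G (last (c @ w))"
  proof (cases "w = []")
    case True then show ?thesis using fc by simp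
  next
    case False then show ?thesis using cons.IH by simp
  qed
  show ?case using s1 s2 h l ch by blast
qed

definition Lf :: "'e list \<Rightarrow> 'e list \<Rightarrow> 'e list set" where
  "Lf c1 c2 = {x. \<exists>p s. p @ x @ s \<in> Wd c1 c2}"

lemma Lf_prop:
  assumes "c1 \<in> closed_paths G v" "c2 \<in> closed_paths G v" "x \<in> Lf c1 c2"
  shows "set x \<subseteq> E G \<and> set x \<subseteq> set c1 \<union> set c2 \<and> chain G x"
proof -
  obtain p s where w: "p @ x @ s \<in> Wd c1 c2" using assms(3) by (auto simp: Lf_def)
  have W: "set (p @ x @ s) \<subseteq> E G" "set (p @ x @ s) \<subseteq> set c1 \<union> set c2" "chain G (p @ x @ s)"
    using Wd_prop[OF assms(1,2) w] by blast+
  have "set x \<subseteq> set (p @ x @ s)" by auto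
  then show ?thesis using W chain_infix[of G p x s] by blast
qed

lemma Lf_nil: "[] \<in> Lf c1 c2"
  unfolding Lf_def using Wd.nil[of c1 c2] by (intro CollectI exI[of _ "[]"]) simp

definition Yd :: "'e list \<Rightarrow> 'e list \<Rightarrow> ('v, 'e) xpt set" where
  "Yd c1 c2 = {Inf \<gamma> | \<gamma>. \<forall>n. map \<gamma> [0..<n] \<in> Lf c1 c2}"

lemma Yd_ipath:
  assumes "c1 \<in> closed_paths G v" "c2 \<in> closed_paths G v" "\<forall>n. map \<gamma> [0..<n] \<in> Lf c1 c2"
  shows "ipath G \<gamma> \<and> (\<forall>i. \<gamma> i \<in> set c1 \<union> set c2)"
proof -
  have P: "\<And>n. set (map \<gamma> [0..<n]) \<subseteq> E G \<and> set (map \<gamma> [0..<n]) \<subseteq> set c1 \<union> set c2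
        \<and> chain G (map \<gamma> [0..<n])"
    using Lf_prop[OF assms(1,2)] assms(3) by blast
  have "\<forall>i. \<gamma> i \<in> E G \<and> \<gamma> i \<in> set c1 \<union> set c2"
  proof
    fix i show "\<gamma> i \<in> E G \<and> \<gamma> i \<in> set c1 \<union> set c2" using P[of "Suc i"] by auto
  qed
  moreover have "\<forall>i. src G (\<gamma> (Suc i)) \<in> rng G (\<gamma> i)"
  proof
    fix i
    have "chain G (map \<gamma> [0..<Suc (Suc i)])" using P by blast
    moreover have "Suc i < length (map \<gamma> [0..<Suc (Suc i)])" by simp
    ultimately have "src G (map \<gamma> [0..<Suc (Suc i)] ! Suc i) \<in> rng G (map \<gamma> [0..<Suc (Suc i)] ! i)"
      unfolding chain_def by blast
    then show "src G (\<gamma> (Suc i)) \<in> rng G (\<gamma> i)"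
      by (simp only: nth_map_upt) simp
  qed
  ultimately show ?thesis by (simp add: ipath_def)
qed

lemma Lf_infix: "p @ x @ s \<in> Lf c1 c2 \<Longrightarrow> x \<in> Lf c1 c2"
  unfolding Lf_def by (auto, metis append.assoc)

lemma Yd_shift: "y \<in> Yd c1 c2 \<Longrightarrow> shift y \<in> Yd c1 c2"
proof -
  assume "y \<in> Yd c1 c2"
  then obtain \<gamma> where y: "y = Inf \<gamma>" and P: "\<forall>n. map \<gamma> [0..<n] \<in> Lf c1 c2"
    by (auto simp: Yd_def)
  have "\<forall>n. map (\<lambda>i. \<gamma> (Suc i)) [0..<n] \<in> Lf c1 c2"
  proof
    fix n
    have "map \<gamma> [0..<Suc n] = [\<gamma> 0] @ map (\<lambda>i. \<gamma> (Suc i)) [0..<n] @ []"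
      by (simp add: map_upt_Suc del: upt_Suc)
    then show "map (\<lambda>i. \<gamma> (Suc i)) [0..<n] \<in> Lf c1 c2"
      using P[rule_format, of "Suc n"] Lf_infix[of "[\<gamma> 0]" _ "[]"] by simp
  qed
  then show ?thesis using y by (simp add: Yd_def)
qed



lemma concat_len: "(\<forall>j<m. length (f j) = K) \<Longrightarrow> length (concat (map f [0..<m])) = m * K"
  by (induction m) auto

lemma concat_nth:
  "(\<forall>j<m. length (f j) = K) \<Longrightarrow> i < m * K \<Longrightarrow> concat (map f [0..<m]) ! i = f (i div K) ! (i mod K)"
proof (induction m arbitrary: i)
  case 0 then show ?case by simp
next
  case (Suc m)
  have len: "length (concat (map f [0..<m])) = m * K" using Suc.prems(1) concat_len[of m f K] by simp
  show ?case
  proof (cases "i < m * K")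
    case True
    then show ?thesis using Suc by (simp add: nth_append len)
  next
    case False
    then obtain r where r: "i = m * K + r" "r < K" using Suc.prems(2)
      by (metis add.commute le_add_diff_inverse mult_Suc not_less add_less_cancel_left)
    have "i div K = m" "i mod K = r" using r by auto
    then show ?thesis using False r by (simp add: nth_append len)
  qed
qed

lemma Wd_concat: "(\<forall>j<m. f j \<in> Wd c1 c2) \<Longrightarrow> concat (map f [0..<m]) \<in> Wd c1 c2"
  by (induction m) (auto intro: Wd_app Wd.nil)

lemma cp_interior: "c \<in> closed_paths G v \<Longrightarrow> 0 < i \<Longrightarrow> i < length c \<Longrightarrow> src G (c ! i) \<noteq> v"
  by (auto simp: closed_paths_def)

lemma cp_hd: "c \<in> closed_paths G v \<Longrightarrow> c \<noteq> [] \<and> src G (c ! 0) = v"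
  by (auto simp: closed_paths_def fpath_def hd_conv_nth)

lemma ab_neq:
  assumes c1: "c1 \<in> closed_paths G v" and c2: "c2 \<in> closed_paths G v" and ne: "c1 \<noteq> c2"
  shows "c1 @ c2 \<noteq> c2 @ c1"
proof
  assume eq: "c1 @ c2 = c2 @ c1"
  have h1: "c1 \<noteq> []" "src G (c1 ! 0) = v" using cp_hd[OF c1] by auto
  have h2: "c2 \<noteq> []" "src G (c2 ! 0) = v" using cp_hd[OF c2] by auto
  consider "length c1 < length c2" | "length c2 < length c1" | "length c1 = length c2" by linarith
  then show False
  proof cases
    case 1
    have "(c1 @ c2) ! length c1 = c2 ! 0" by (simp add: nth_append)
    moreover have "(c2 @ c1) ! length c1 = c2 ! length c1" using 1 by (simp add: nth_append)
    ultimately have "src G (c2 ! length c1) = v" using eq h2 by metis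
    then show False using cp_interior[OF c2, of "length c1"] 1 h1 by simp
  next
    case 2
    have "(c2 @ c1) ! length c2 = c1 ! 0" by (simp add: nth_append)
    moreover have "(c1 @ c2) ! length c2 = c1 ! length c2" using 2 by (simp add: nth_append)
    ultimately have "src G (c1 ! length c2) = v" using eq h1 by metis
    then show False using cp_interior[OF c1, of "length c2"] 2 h2 by simp
  next
    case 3
    have "take (length c1) (c1 @ c2) = c1" by simp
    moreover have "take (length c1) (c2 @ c1) = c2" using 3 by simp
    ultimately show False using eq ne by metis
  qed
qed

lemma Yd_uncountable:
  assumes c1: "c1 \<in> closed_paths G v" and c2: "c2 \<in> closed_paths G v" and ne: "c1 \<noteq> c2"
  shows "uncountable (Yd c1 c2 :: ('v, 'e) xpt set)"
proof
  assume cY: "countable (Yd c1 c2 :: ('v, 'e) xpt set)"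
  define a where "a = c1 @ c2"
  define b where "b = c2 @ c1"
  define K where "K = length a"
  have lb: "length b = K" unfolding K_def a_def b_def by simp
  have K0: "0 < K" using cp_hd[OF c1] unfolding K_def a_def by simp
  have aW: "a \<in> Wd c1 c2" "b \<in> Wd c1 c2" unfolding a_def b_def using Wd_app[OF Wd_c1 Wd_c2] Wd_app[OF Wd_c2 Wd_c1] by auto
  have abne: "a \<noteq> b" unfolding a_def b_def using ab_neq[OF c1 c2 ne] .
  define blk where "blk = (\<lambda>(\<beta>::nat \<Rightarrow> bool) j. if \<beta> j then a else b)"
  define g where "g = (\<lambda>\<beta> i. blk \<beta> (i div K) ! (i mod K))"
  define f :: "(nat \<Rightarrow> bool) \<Rightarrow> ('v, 'e) xpt" where "f = (\<lambda>\<beta>. Inf (g \<beta>))"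
  have blen: "\<And>\<beta> j. length (blk \<beta> j) = K" unfolding blk_def using lb K_def by auto
  have bW: "\<And>\<beta> j. blk \<beta> j \<in> Wd c1 c2" unfolding blk_def using aW by auto
  have inY: "f \<beta> \<in> Yd c1 c2" for \<beta>
  proof -
    have "\<forall>n. map (g \<beta>) [0..<n] \<in> Lf c1 c2"
    proof
      fix n
      define w where "w = concat (map (blk \<beta>) [0..<n])"
      have wW: "w \<in> Wd c1 c2" unfolding w_def using Wd_concat bW by blast
      have wl: "length w = n * K" unfolding w_def using concat_len blen by blast
      have nK: "n \<le> n * K" using K0 by simp
      have "map (g \<beta>) [0..<n] = take n w"
      proof (rule nth_equalityI)
        show "length (map (g \<beta>) [0..<n]) = length (take n w)" using wl nK by simp
        fix i assume "i < length (map (g \<beta>) [0..<n])"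
        then have i: "i < n" by simp
        then have "i < n * K" using nK by (meson less_le_trans)
        then have "w ! i = blk \<beta> (i div K) ! (i mod K)" unfolding w_def using concat_nth blen by blast
        then show "map (g \<beta>) [0..<n] ! i = take n w ! i" using i unfolding g_def by simp
      qed
      moreover have "[] @ take n w @ drop n w \<in> Wd c1 c2" using wW by simp
      ultimately show "map (g \<beta>) [0..<n] \<in> Lf c1 c2" unfolding Lf_def
        by (intro CollectI exI[of _ "[]"] exI[of _ "drop n w"]) simp
    qed
    then show ?thesis unfolding f_def Yd_def by blast
  qed
  have inj: "inj f"
  proof
    fix \<beta> \<beta>' assume eq: "f \<beta> = f \<beta>'"
    show "\<beta> = \<beta>'"
    proof (rule ccontr)
      assume "\<beta> \<noteq> \<beta>'"
      then obtain j where j: "\<beta> j \<noteq> \<beta>' j" by auto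
      obtain r where r: "r < K" "a ! r \<noteq> b ! r"
        using abne lb K_def nth_equalityI by metis
      have g: "g \<beta> = g \<beta>'" using eq unfolding f_def by simp
      have d: "(j * K + r) div K = j" "(j * K + r) mod K = r" using r(1) by auto
      have "g \<beta> (j * K + r) = blk \<beta> j ! r" unfolding g_def using d by simp
      moreover have "g \<beta>' (j * K + r) = blk \<beta>' j ! r" unfolding g_def using d by simp
      ultimately have "blk \<beta> j ! r = blk \<beta>' j ! r" using g by simp
      then show False using j r(2) unfolding blk_def by (cases "\<beta> j") auto
    qed
  qed
  have "range f \<subseteq> Yd c1 c2" using inY by auto
  then have "countable (range f)" using cY countable_subset by blast
  then have "countable (UNIV :: (nat \<Rightarrow> bool) set)" using inj countable_image_inj_on by blast
  then show False using uncountable_nat_bool by simp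
qed



lemma Yd_cyc:
  assumes c1: "c1 \<in> closed_paths G v" and pw: "p @ w \<in> Wd c1 c2"
  shows "Inf (concat_inf w (\<lambda>i. c1 ! (i mod length c1))) \<in> (Yd c1 c2 :: ('v, 'e) xpt set)"
proof -
  let ?g = "concat_inf w (\<lambda>i. c1 ! (i mod length c1))"
  have K0: "0 < length c1" using cp_hd[OF c1] by simp
  have "\<forall>n. map ?g [0..<n] \<in> Lf c1 c2"
  proof
    fix n
    define rep where "rep = concat (map (\<lambda>_. c1) [0..<n])"
    have rW: "rep \<in> Wd c1 c2" unfolding rep_def using Wd_concat[of n "\<lambda>_. c1"] Wd_c1 by blast
    have rl: "length rep = n * length c1" unfolding rep_def using concat_len[of n "\<lambda>_. c1"] by simp
    have nK: "n \<le> n * length c1" using K0 by (simp add: Suc_le_eq)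
    define X where "X = w @ rep"
    have eqX: "map ?g [0..<n] = take n X"
    proof (rule nth_equalityI)
      have "n \<le> length X" unfolding X_def using rl nK by (simp only: length_append)
      then show "length (map ?g [0..<n]) = length (take n X)" by simp
      fix i assume "i < length (map ?g [0..<n])"
      then have i: "i < n" by simp
      show "map ?g [0..<n] ! i = take n X ! i"
      proof (cases "i < length w")
        case True then show ?thesis using i unfolding X_def by (simp add: concat_inf_def nth_append)
      next
        case False
        have "i - length w < n * length c1" using i nK by linarith
        then have "rep ! (i - length w) = c1 ! ((i - length w) mod length c1)"
          unfolding rep_def using concat_nth[of n "\<lambda>_. c1" "length c1"] by simp
        then show ?thesis using i False unfolding X_def by (simp add: concat_inf_def nth_append)
      qed
    qed
    have A: "p @ take n X @ drop n X \<in> Wd c1 c2"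
      using Wd_app[OF pw rW] by (simp only: append_take_drop_id X_def append_assoc)
    show "map ?g [0..<n] \<in> Lf c1 c2" unfolding eqX Lf_def using A by blast
  qed
  then show ?thesis unfolding Yd_def by blast
qed

lemma Yd_memD: "Inf \<gamma> \<in> Yd c1 c2 \<Longrightarrow> \<forall>n. map \<gamma> [0..<n] \<in> Lf c1 c2"
  by (auto simp: Yd_def)

lemma Yd_Inf: "y \<in> Yd c1 c2 \<Longrightarrow> \<exists>\<gamma>. y = Inf \<gamma> \<and> (\<forall>n. map \<gamma> [0..<n] \<in> Lf c1 c2)"
  by (auto simp: Yd_def)

lemma concat_inf_prefix: "map (concat_inf x \<gamma>) [0..<length x] = x"
  by (rule nth_equalityI) (auto simp: concat_inf_def)

lemma concat_inf_app: "concat_inf x (concat_inf s \<gamma>) = concat_inf (x @ s) \<gamma>"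
  by (auto simp: concat_inf_def nth_append fun_eq_iff)

lemma blocks_Yd:
  assumes c1: "c1 \<in> closed_paths G v" and c2: "c2 \<in> closed_paths G v"
  shows "x \<in> blocks G (Yd c1 c2 :: ('v, 'e) xpt set) \<longleftrightarrow> x \<in> Lf c1 c2 \<and> x \<noteq> []"
proof
  assume "x \<in> blocks G (Yd c1 c2 :: ('v, 'e) xpt set)"
  then obtain \<gamma> where fp: "fpath G x" and inY: "Inf (concat_inf x \<gamma>) \<in> (Yd c1 c2 :: ('v, 'e) xpt set)"
    by (auto simp: blocks_def blocks_n_def)
  have "map (concat_inf x \<gamma>) [0..<length x] \<in> Lf c1 c2" using Yd_memD[OF inY] by blast
  then show "x \<in> Lf c1 c2 \<and> x \<noteq> []" using fp concat_inf_prefix by (metis fpath_def)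
next
  assume xL: "x \<in> Lf c1 c2 \<and> x \<noteq> []"
  then obtain p s where W: "p @ x @ s \<in> Wd c1 c2" by (auto simp: Lf_def)
  let ?cyc = "\<lambda>i. c1 ! (i mod length c1)"
  have fp: "fpath G x" using Lf_prop[OF c1 c2] xL by (auto simp: fpath_chain)
  have "Inf (concat_inf (x @ s) ?cyc) \<in> (Yd c1 c2 :: ('v, 'e) xpt set)" using Yd_cyc[OF c1 W] by simp
  then have in1: "Inf (concat_inf x (concat_inf s ?cyc)) \<in> (Yd c1 c2 :: ('v, 'e) xpt set)" by (simp add: concat_inf_app)
  have W2: "(p @ x) @ s \<in> Wd c1 c2" using W by simp
  have "Inf (concat_inf s ?cyc) \<in> (Yd c1 c2 :: ('v, 'e) xpt set)" using Yd_cyc[OF c1 W2] by simp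
  then have ip: "ipath G (concat_inf s ?cyc)" using Yd_ipath[OF c1 c2] Yd_memD by blast
  have "x \<in> blocks_n G (Yd c1 c2 :: ('v, 'e) xpt set) (length x)"
    unfolding blocks_n_def using fp ip in1 by blast
  moreover have "length x \<in> {1..}" using xL by (simp add: Suc_le_eq)
  ultimately show "x \<in> blocks G (Yd c1 c2 :: ('v, 'e) xpt set)" unfolding blocks_def by blast
qed

lemma Yd_irr:
  assumes c1: "c1 \<in> closed_paths G v" and c2: "c2 \<in> closed_paths G v"
  shows "irreducible_sub G (Yd c1 c2 :: ('v, 'e) xpt set)"
  unfolding irreducible_sub_def
proof (intro ballI)
  fix u w assume u: "u \<in> blocks G (Yd c1 c2 :: ('v, 'e) xpt set)" and w: "w \<in> blocks G (Yd c1 c2 :: ('v, 'e) xpt set)"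
  obtain p s where ps: "p @ u @ s \<in> Wd c1 c2" using u blocks_Yd[OF c1 c2] by (auto simp: Lf_def)
  obtain p' s' where ps': "p' @ w @ s' \<in> Wd c1 c2" using w blocks_Yd[OF c1 c2] by (auto simp: Lf_def)
  have big: "(p @ u @ s) @ c1 @ (p' @ w @ s') \<in> Wd c1 c2"
    using Wd_app[OF ps Wd_app[OF Wd_c1 ps']] .
  have c1ne: "c1 \<noteq> []" using cp_hd[OF c1] by simp
  let ?z = "s @ c1 @ p'"
  have "(p @ u) @ ?z @ (w @ s') \<in> Wd c1 c2" using big by simp
  then have zL: "?z \<in> Lf c1 c2" unfolding Lf_def by blast
  have "p @ (u @ ?z @ w) @ s' \<in> Wd c1 c2" using big by simp
  then have uzwL: "u @ ?z @ w \<in> Lf c1 c2" unfolding Lf_def by blast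
  have "?z \<in> blocks G (Yd c1 c2 :: ('v, 'e) xpt set)" using zL c1ne blocks_Yd[OF c1 c2] by simp
  moreover have "u @ ?z @ w \<in> blocks G (Yd c1 c2 :: ('v, 'e) xpt set)" using uzwL c1ne blocks_Yd[OF c1 c2] by simp
  ultimately show "\<exists>z\<in>blocks G (Yd c1 c2 :: ('v, 'e) xpt set). u @ z @ w \<in> blocks G (Yd c1 c2 :: ('v, 'e) xpt set)" by blast
qed



lemma Yd_sub:
  assumes c1: "c1 \<in> closed_paths G v" and c2: "c2 \<in> closed_paths G v"
  shows "(Yd c1 c2 :: ('v, 'e) xpt set) \<subseteq> shift_space G"
proof
  fix y assume "y \<in> (Yd c1 c2 :: ('v, 'e) xpt set)"
  then obtain \<gamma> where y: "y = Inf \<gamma>" and P: "\<forall>n. map \<gamma> [0..<n] \<in> Lf c1 c2" using Yd_Inf by blast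
  have "ipath G \<gamma>" using Yd_ipath[OF c1 c2 P] by blast
  then show "y \<in> shift_space G" using y by (auto simp: shift_space_def)
qed

lemma Yd_closed:
  assumes u: "is_ultragraph G" and c1: "c1 \<in> closed_paths G v" and c2: "c2 \<in> closed_paths G v"
  shows "xclosed G (Yd c1 c2 :: ('v, 'e) xpt set)"
  unfolding xclosed_def
proof (intro conjI ballI impI)
  show "(Yd c1 c2 :: ('v, 'e) xpt set) \<subseteq> shift_space G" using Yd_sub[OF c1 c2] .
  fix x :: "('v, 'e) xpt"
  assume xs: "x \<in> shift_space G" and H: "\<forall>\<epsilon>>0. \<exists>y\<in>(Yd c1 c2 :: ('v, 'e) xpt set). xdist G x y < \<epsilon>"
  have cU: "countable (ultrapaths G)" using ultrapaths_countable[OF u] .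
  have near: "\<exists>y\<in>(Yd c1 c2 :: ('v, 'e) xpt set). \<forall>p\<in>F. init_seg G p x = init_seg G p y"
    if fF0: "finite F" and sF0: "F \<subseteq> ultrapaths G" for F
  proof -
    obtain N where N: "\<forall>x y. xdist G x y < (1/2)^N \<longrightarrow> (\<forall>p\<in>F. init_seg G p x \<longleftrightarrow> init_seg G p y)"
      using key_fin[OF cU fF0 sF0] by blast
    have "(0::real) < (1/2)^N" by simp
    then obtain y where "y \<in> (Yd c1 c2 :: ('v, 'e) xpt set)" "xdist G x y < (1/2)^N" using H by blast
    then show ?thesis using N by blast
  qed
  show "x \<in> (Yd c1 c2 :: ('v, 'e) xpt set)"
  proof (cases x)
    case (Inf \<gamma>)
    have ip: "ipath G \<gamma>" using xs Inf by (auto simp: shift_space_def)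
    have "\<forall>n. map \<gamma> [0..<n] \<in> Lf c1 c2"
    proof
      fix n show "map \<gamma> [0..<n] \<in> Lf c1 c2"
      proof (cases n)
        case 0 then show ?thesis using Lf_nil by simp
      next
        case (Suc m)
        let ?p = "(map \<gamma> [0..<Suc m], rng G (\<gamma> m))"
        have fp: "fpath G (map \<gamma> [0..<Suc m])" using ipath_prefix[OF ip, of "Suc m"] by (simp del: upt_Suc)
        have em: "\<gamma> m \<in> E G" using ip by (simp add: ipath_def)
        have "?p \<in> ultrapaths G" unfolding ultrapaths_def using fp gverts.rng[OF em]
          by (simp del: upt_Suc add: last_map)
        then obtain y where y: "y \<in> (Yd c1 c2 :: ('v, 'e) xpt set)" and ag: "init_seg G ?p x = init_seg G ?p y"
          using near[of "{?p}"] by auto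
        have "init_seg G ?p x" using Inf ip by (simp del: upt_Suc add: ipath_def)
        then have iy: "init_seg G ?p y" using ag by simp
        obtain \<delta> where d: "y = Inf \<delta>" and P: "\<forall>n. map \<delta> [0..<n] \<in> Lf c1 c2" using Yd_Inf[OF y] by blast
        have "\<forall>i<Suc m. \<delta> i = \<gamma> i" using iy d by (simp del: upt_Suc)
        then have "map \<delta> [0..<Suc m] = map \<gamma> [0..<Suc m]" by (simp del: upt_Suc)
        then show ?thesis using P Suc by metis
      qed
    qed
    then show ?thesis using Inf by (simp add: Yd_def)
  next
    case (Fin \<alpha> A)
    have AG: "A \<in> gverts G" and al: "\<alpha> = [] \<or> (fpath G \<alpha> \<and> A \<subseteq> rng G (last \<alpha>))"
      using xs Fin by (auto simp: shift_space_def min_inf_emitter_def inf_emitter_def)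
    have p0: "(\<alpha>, A) \<in> ultrapaths G" using AG al unfolding ultrapaths_def by auto
    define C where "C = set c1 \<union> set c2"
    define Q where "Q = (\<lambda>e. (\<alpha> @ [e], rng G e)) ` C \<inter> ultrapaths G"
    have fF: "finite (insert (\<alpha>, A) Q)" unfolding Q_def C_def by simp
    have sF: "insert (\<alpha>, A) Q \<subseteq> ultrapaths G" using p0 unfolding Q_def by auto
    obtain y where y: "y \<in> (Yd c1 c2 :: ('v, 'e) xpt set)"
      and ag: "\<forall>p\<in>insert (\<alpha>, A) Q. init_seg G p x = init_seg G p y"
      using near[OF fF sF] by blast
    obtain \<delta> where d: "y = Inf \<delta>" and P: "\<forall>n. map \<delta> [0..<n] \<in> Lf c1 c2" using Yd_Inf[OF y] by blast
    have ipC: "ipath G \<delta> \<and> (\<forall>i. \<delta> i \<in> set c1 \<union> set c2)" using Yd_ipath[OF c1 c2 P] .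
    have "init_seg G (\<alpha>, A) x" using Fin by simp
    then have "init_seg G (\<alpha>, A) (Inf \<delta>)" using ag d by auto
    then have pre: "\<forall>i<length \<alpha>. \<delta> i = \<alpha> ! i" by simp
    define e where "e = \<delta> (length \<alpha>)"
    have eq: "\<alpha> @ [e] = map \<delta> [0..<Suc (length \<alpha>)]"
      by (rule nth_equalityI) (auto simp: pre e_def nth_append less_Suc_eq simp del: upt_Suc)
    have fpe: "fpath G (\<alpha> @ [e])" unfolding eq using ipath_prefix ipC by blast
    have eE: "e \<in> E G" using ipC unfolding e_def ipath_def by blast
    have "(\<alpha> @ [e], rng G e) \<in> ultrapaths G" unfolding ultrapaths_def using fpe gverts.rng[OF eE] by simp
    moreover have "e \<in> C" using ipC unfolding e_def C_def by blast
    ultimately have qQ: "(\<alpha> @ [e], rng G e) \<in> Q" unfolding Q_def by blast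
    have "init_seg G (\<alpha> @ [e], rng G e) (Inf \<delta>)"
      using pre ipC unfolding e_def ipath_def by (auto simp: nth_append less_Suc_eq)
    moreover have "\<not> init_seg G (\<alpha> @ [e], rng G e) x" using Fin by simp
    ultimately show ?thesis using ag qQ d by auto
  qed
qed

theorem proposition3p9:
  fixes G :: "('v, 'e) ultragraph"
  assumes "is_ultragraph G" and "no_sinks G"
  shows "(\<exists>Y. Y \<subseteq> shift_space G \<and> xclosed G Y \<and> shift ` Y \<subseteq> Y
              \<and> uncountable Y \<and> irreducible_sub G Y)
         \<longleftrightarrow> (\<exists>v\<in>V G. \<exists>c1\<in>closed_paths G v. \<exists>c2\<in>closed_paths G v. c1 \<noteq> c2)"
proof
  assume "\<exists>Y. Y \<subseteq> shift_space G \<and> xclosed G Y \<and> shift ` Y \<subseteq> Y \<and> uncountable Y \<and> irreducible_sub G Y"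
  then obtain Y where Y1: "Y \<subseteq> shift_space G" and Y2: "uncountable Y" and Y3: "irreducible_sub G Y"
    by blast
  show "\<exists>v\<in>V G. \<exists>c1\<in>closed_paths G v. \<exists>c2\<in>closed_paths G v. c1 \<noteq> c2"
  proof (rule ccontr)
    assume "\<not> (\<exists>v\<in>V G. \<exists>c1\<in>closed_paths G v. \<exists>c2\<in>closed_paths G v. c1 \<noteq> c2)"
    then show False by (rule forward[OF assms(1) Y1 Y2 Y3])
  qed
next
  assume "\<exists>v\<in>V G. \<exists>c1\<in>closed_paths G v. \<exists>c2\<in>closed_paths G v. c1 \<noteq> c2"
  then obtain v c1 c2 where c1: "c1 \<in> closed_paths G v" and c2: "c2 \<in> closed_paths G v" and ne: "c1 \<noteq> c2"
    by blast
  let ?Y = "Yd c1 c2 :: ('v, 'e) xpt set"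
  have sh: "shift ` ?Y \<subseteq> ?Y" by (rule image_subsetI) (rule Yd_shift)
  show "\<exists>Y. Y \<subseteq> shift_space G \<and> xclosed G Y \<and> shift ` Y \<subseteq> Y \<and> uncountable Y \<and> irreducible_sub G Y"
    by (intro exI[of _ ?Y] conjI Yd_sub[OF c1 c2] Yd_closed[OF assms(1) c1 c2] Yd_uncountable[OF c1 c2 ne] Yd_irr[OF c1 c2] sh)
qed


end
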